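(* Consider the iterates of AS-ALM and fix $k\ge0$ with $\eta_k\in(0,1/\nu)$. Then $\tilde w^k\in\Omega$ and for all $w=(x;\lambda)\in\Omega$, $$f(x)-f(x^{k+1})+\langle w-\tilde w^k,\mathcal J(w)\rangle\ge(w-\tilde w^k)^\top Q_k(w^k-\tilde w^k)+\zeta^k(x),\qquad Q_k=\begin{bmatrix}\mathcal D_k&0\\0&\frac1\beta I\end{bmatrix}.$$
   Context: Setting. $\mathcal X\subset\mathbb R^{n_1}$ is a nonempty closed convex set; $A\in\mathbb R^{n\times n_1}$, $b\in\mathbb R^n$; $f=\frac1N\sum_{j=1}^Nf_j$, each $f_j$ real-valued, convex and continuously differentiable on an open set containing $\mathcal X$. The problem is $\min\{f(x):Ax=b,\ x\in\mathcal X\}$. A fixed symmetric positive definite $H$ and a constant $\nu>0$ satisfy $\|\nabla f_j(x_1)-\nabla f_j(x_2)\|_{H^{-1}}\le\nu\|x_1-x_2\|_H$ for all $x_1,x_2\in\mathcal X$ and all $j$. For symmetric $G$, $\|v\|_G^2:=v^\top Gv$; $G_1\succeq G_2$ means $G_1-G_2$ is positive semidefinite. Subroutine xsub. Inputs: $x^k\in\mathcal X$, $\breve x^k$, $h\in\mathbb R^{n_1}$, an integer $m_k\ge1$, $\eta_k>0$, a symmetric matrix $M_k$. Set $x_1=x^k$, $\breve x_1=\breve x^k$. For $t=1,\dots,m_k$: draw $\xi_t$ uniformly from $\{1,\dots,N\}$, independently of everything generated before; set $\beta_t=2/(t+1)$, $\gamma_t=2/(t\eta_k)$, $\hat x_t=\beta_t\breve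 x_t+(1-\beta_t)x_t$, $d_t=\nabla f_{\xi_t}(\hat x_t)+e_t$ where $e_t$ is a random vector whose conditional expectation given all previously generated random quantities and $\xi_t$ is $0$; $\breve x_{t+1}=\arg\min_{x\in\mathcal X}\{\langle d_t+h,x\rangle+\frac{\gamma_t}2\|x-\breve x_t\|_H^2+\frac12\|x-x^k\|_{M_k}^2\}$; $x_{t+1}=\beta_t\breve x_{t+1}+(1-\beta_t)x_t$. Output $x^{k+1}=x_{m_k+1}$, $\breve x^{k+1}=\breve x_{m_k+1}$. Put $\delta_t=\nabla f(\hat x_t)-d_t$ (inner quantities of outer iteration $k$), and for $x\in\mathcal X$ $$\zeta^k(x)=\frac{2}{m_k(m_k+1)}\Big[\frac1{\eta_k}\big(\|x-\breve x^{k+1}\|_H^2-\|x-\breve x^k\|_H^2\big)-\sum_{t=1}^{m_k}t\langle\delta_t,\breve x_t-x\rangle-\frac{\eta_k}{4(1-\eta_k\nu)}\sum_{t=1}^{m_k}t^2\|\delta_t\|_{H^{-1}}^2\Big].$$ Algorithm AS-ALM. Parameters: $\beta>0$, $s\in(0,2]$, the matrix $H$. Start: $(x^0,\lambda^0)\in\mathcal X\times\mathbb R^n$, $\breve x^0=x^0$. For $k=0,1,\dots$: choose an integer $m_k\ge1$, $\eta_k>0$ and a symmetric $M_k$ with $\mathcal D_k:=M_k-\beta A^\top A\succeq0$; set $h^k=-A^\top[\lambda^k-\beta(Ax^k-b)]$; compute $(x^{k+1},\breve x^{k+1})$ by xsub with inputs $x^k,\breve x^k,h^k,m_k,\eta_k,M_k$;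 $\lambda^{k+1}=\lambda^k-s\beta(Ax^{k+1}-b)$. Notation. $\Omega=\mathcal X\times\mathbb R^n$; $w=(x;\lambda)$; $\mathcal J(w)=(-A^\top\lambda;\,Ax-b)$; $w^k=(x^k;\lambda^k)$; $\tilde\lambda^k=\lambda^k-\beta(Ax^{k+1}-b)$; $\tilde w^k=(x^{k+1};\tilde\lambda^k)$. *)

theory Defs
  imports "HOL-Analysis.Analysis"
begin

text \<open>Squared weighted norm: qf G v = v^T G v = (norm_G v)^2.\<close>
definition qf :: "real^'n^'n \<Rightarrow> real^'n \<Rightarrow> real" where
  "qf G v = v \<bullet> (G *v v)"

definition psd :: "real^'n^'n \<Rightarrow> bool" where
  "psd G \<longleftrightarrow> (\<forall>v. 0 \<le> qf G v)"

definition sym_pd :: "real^'n^'n \<Rightarrow> bool" where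
  "sym_pd G \<longleftrightarrow> transpose G = G \<and> (\<forall>v. v \<noteq> 0 \<longrightarrow> 0 < qf G v)"

definition favg :: "nat \<Rightarrow> (nat \<Rightarrow> 'a \<Rightarrow> real) \<Rightarrow> 'a \<Rightarrow> real" where
  "favg N f x = (\<Sum>j=1..N. f j x) / real N"

definition gavg :: "nat \<Rightarrow> (nat \<Rightarrow> 'a \<Rightarrow> 'a::real_vector) \<Rightarrow> 'a \<Rightarrow> 'a" where
  "gavg N g x = (1 / real N) *\<^sub>R (\<Sum>j=1..N. g j x)"

end

theory Submission
  imports Defs
begin

lemma sym_inner: "transpose G = G \<Longrightarrow> v \<bullet> ((G::real^'n^'n) *v u) = u \<bullet> (G *v v)"
  by (metis dot_lmul_matrix inner_commute transpose_matrix_vector)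

lemma qf_add: "transpose G = G \<Longrightarrow> qf G (u + v) = qf G u + 2 * (u \<bullet> (G *v v)) + qf G v"
  unfolding qf_def using sym_inner[of G u v]
  by (simp add: matrix_vector_mult_add_rdistrib inner_add_left inner_add_right algebra_simps matrix_vector_right_distrib)

lemma qf_scale: "qf G (c *\<^sub>R v) = c^2 * qf G v"
  unfolding qf_def by (simp add: matrix_vector_mult_scaleR power2_eq_square)

lemma qf_minus: "qf G (- v) = qf G v"
  using qf_scale[of G "-1" v] by simp

lemma mv_neg: "(G::real^'n^'m) *v (- v) = - (G *v v)"
  by (metis matrix_vector_mult_scaleR scaleR_minus1_left)

lemma qf_diff: "transpose G = G \<Longrightarrow> qf G (u - v) = qf G u - 2 * (u \<bullet> (G *v v)) + qf G v"
  using qf_add[of G u "-v"] by (simp add: qf_minus mv_neg)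

lemma pd_nonneg: "sym_pd H \<Longrightarrow> 0 \<le> qf H v"
  unfolding sym_pd_def by (cases "v = 0") (auto simp: qf_def intro: less_imp_le)

lemma pd_inv: assumes "sym_pd H" shows "H *v (matrix_inv H *v u) = u"
proof -
  have "\<forall>x. H *v x = 0 \<longrightarrow> x = 0" using assms unfolding sym_pd_def qf_def
    by (metis inner_zero_right less_irrefl)
  then have "invertible H" using matrix_left_invertible_ker invertible_left_inverse by blast
  then have "H ** matrix_inv H = mat 1 \<and> matrix_inv H ** H = mat 1"
    unfolding matrix_inv_def invertible_def by (rule someI_ex)
  then show ?thesis by (metis matrix_vector_mul_assoc matrix_vector_mul_lid)
qed

lemma young_H:
  assumes H: "sym_pd H" and c: "c > 0"
  shows "u \<bullet> v \<le> qf (matrix_inv H) u / (2*c) + c/2 * qf H v"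
proof -
  define w where "w = matrix_inv H *v u"
  have Hw: "H *v w = u" using pd_inv[OF H] w_def by simp
  have sym: "transpose H = H" using H sym_pd_def by blast
  have "0 \<le> qf H (w - c *\<^sub>R v)" by (rule pd_nonneg[OF H])
  also have "\<dots> = qf H w - 2 * (w \<bullet> (H *v (c *\<^sub>R v))) + qf H (c *\<^sub>R v)"
    by (rule qf_diff[OF sym])
  also have "qf H w = qf (matrix_inv H) u" unfolding qf_def w_def using Hw w_def by (simp add: inner_commute)
  also have "w \<bullet> (H *v (c *\<^sub>R v)) = c * (u \<bullet> v)"
    using sym_inner[OF sym, of w v] Hw by (simp add: matrix_vector_mult_scaleR inner_commute)
  also have "qf H (c *\<^sub>R v) = c^2 * qf H v" by (rule qf_scale)
  finally have "2 * c * (u \<bullet> v) \<le> qf (matrix_inv H) u + c^2 * qf H v" by simp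
  then show ?thesis using c by (simp add: field_simps power2_eq_square)
qed

lemma qf_inv_nonneg: assumes H: "sym_pd H" shows "0 \<le> qf (matrix_inv H) u"
proof -
  define w where "w = matrix_inv H *v u"
  have Hw: "H *v w = u" using pd_inv[OF H] w_def by simp
  have "qf (matrix_inv H) u = qf H w" unfolding qf_def w_def using Hw w_def by (simp add: inner_commute)
  then show ?thesis using pd_nonneg[OF H] by simp
qed

lemma deriv_line:
  fixes F :: "real^'n \<Rightarrow> real"
  assumes "(F has_derivative (\<lambda>h. h \<bullet> D)) (at (x + s *\<^sub>R v))"
  shows "((\<lambda>t. F (x + t *\<^sub>R v)) has_real_derivative (v \<bullet> D)) (at s)"
proof -
  have d1: "((\<lambda>t. x + t *\<^sub>R v) has_derivative (\<lambda>h. h *\<^sub>R v)) (at s)"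
    by (auto intro!: derivative_eq_intros)
  have "((\<lambda>t. F (x + t *\<^sub>R v)) has_derivative (\<lambda>h. (h *\<^sub>R v) \<bullet> D)) (at s)"
    using has_derivative_compose[OF d1 assms] .
  moreover have "(\<lambda>h. (h *\<^sub>R v) \<bullet> D) = (*) (v \<bullet> D)" by (auto simp: fun_eq_iff)
  ultimately show ?thesis unfolding has_field_derivative_def by simp
qed

lemma conv_grad:
  fixes F :: "real^'n \<Rightarrow> real"
  assumes cv: "convex_on X F" and x: "x \<in> X" and y: "y \<in> X"
    and d: "(F has_derivative (\<lambda>h. h \<bullet> G)) (at x)"
  shows "F x + G \<bullet> (y - x) \<le> F y"
proof -
  define v where "v = y - x"
  have D: "((\<lambda>t. F (x + t *\<^sub>R v)) has_real_derivative (v \<bullet> G)) (at 0)"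
    using deriv_line[of F G x 0 v] d by simp
  then have L: "((\<lambda>h. (F (x + h *\<^sub>R v) - F x) / h) \<longlongrightarrow> v \<bullet> G) (at 0)"
    unfolding DERIV_def by simp
  then have L': "((\<lambda>h. (F (x + h *\<^sub>R v) - F x) / h) \<longlongrightarrow> v \<bullet> G) (at_right 0)"
    by (rule tendsto_mono[OF at_le, rotated]) simp
  have ev: "eventually (\<lambda>h. (F (x + h *\<^sub>R v) - F x) / h \<le> F y - F x) (at_right 0)"
    using eventually_at_right_real[OF zero_less_one]
  proof (rule eventually_mono)
    fix h :: real assume h: "h \<in> {0<..<1}"
    have "x + h *\<^sub>R v = (1 - h) *\<^sub>R x + h *\<^sub>R y" by (simp add: v_def algebra_simps)
    then have "F (x + h *\<^sub>R v) \<le> (1 - h) * F x + h * F y"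
      using convex_onD[OF cv, of h x y] h x y by simp
    then have "F (x + h *\<^sub>R v) - F x \<le> h * (F y - F x)" by (simp add: algebra_simps)
    then show "(F (x + h *\<^sub>R v) - F x) / h \<le> F y - F x" using h by (simp add: divide_le_eq mult.commute)
  qed
  have "v \<bullet> G \<le> F y - F x"
    by (rule tendsto_le[OF trivial_limit_at_right_real tendsto_const L' ev])
  then show ?thesis by (simp add: v_def inner_commute)
qed

lemma descent:
  fixes F :: "real^'n \<Rightarrow> real"
  assumes X: "convex X" and x: "x \<in> X" and y: "y \<in> X" and H: "sym_pd H" and nu: "\<nu> > 0"
    and d: "\<And>p. p \<in> X \<Longrightarrow> (F has_derivative (\<lambda>h. h \<bullet> G p)) (at p)"
    and L: "\<And>p q. p \<in> X \<Longrightarrow> q \<in> X \<Longrightarrow> qf (matrix_inv H) (G p - G q) \<le> \<nu>^2 * qf H (p - q)"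
  shows "F y \<le> F x + G x \<bullet> (y - x) + \<nu>/2 * qf H (y - x)"
proof -
  define v where "v = y - x"
  define \<phi> where "\<phi> s = F (x + s *\<^sub>R v) - s * (G x \<bullet> v) - \<nu>/2 * s^2 * qf H v" for s
  have "\<phi> 1 \<le> \<phi> 0"
  proof (rule DERIV_nonpos_imp_nonincreasing[of 0 1 \<phi>])
    fix s :: real assume s: "0 \<le> s" "s \<le> 1"
    define p where "p = x + s *\<^sub>R v"
    have pX: "p \<in> X" unfolding p_def v_def
      using convexD[OF X x y, of "1 - s" s] s by (simp add: algebra_simps)
    have D1: "((\<lambda>t. F (x + t *\<^sub>R v)) has_real_derivative (v \<bullet> G p)) (at s)"
      using deriv_line d[OF pX] p_def by simp
    have D: "(\<phi> has_real_derivative (v \<bullet> G p - G x \<bullet> v - \<nu>/2 * (2 * s) * qf H v)) (at s)"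
      unfolding \<phi>_def by (rule D1 derivative_eq_intros refl | simp)+
    have "v \<bullet> G p - G x \<bullet> v \<le> \<nu> * s * qf H v"
    proof (cases "s = 0")
      case True then show ?thesis by (simp add: p_def inner_commute)
    next
      case False
      then have sp: "s > 0" using s by simp
      have "(G p - G x) \<bullet> v \<le> qf (matrix_inv H) (G p - G x) / (2 * (\<nu> * s)) + (\<nu> * s) / 2 * qf H v"
        by (rule young_H[OF H]) (use sp nu in simp)
      also have "qf (matrix_inv H) (G p - G x) \<le> \<nu>^2 * (s^2 * qf H v)"
        using L[OF pX x] by (simp add: p_def qf_scale)
      then have "qf (matrix_inv H) (G p - G x) / (2 * (\<nu> * s)) \<le> \<nu>^2 * (s^2 * qf H v) / (2 * (\<nu> * s))"
        using sp nu by (intro divide_right_mono) auto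
      also have "\<nu>^2 * (s^2 * qf H v) / (2 * (\<nu> * s)) = \<nu> * s / 2 * qf H v"
        using sp nu by (simp add: field_simps power2_eq_square)
      finally show ?thesis by (simp add: inner_diff_left inner_diff_right inner_commute mult.assoc)
    qed
    then show "\<exists>y. (\<phi> has_real_derivative y) (at s) \<and> y \<le> 0" using D by (intro exI[of _ "v \<bullet> G p - G x \<bullet> v - \<nu>/2 * (2 * s) * qf H v"]) auto
  qed simp
  then show ?thesis by (simp add: \<phi>_def v_def)
qed

lemma gavg_inner: "gavg N g x \<bullet> w = (\<Sum>j=1..N. g j x \<bullet> w) / real N"
  unfolding gavg_def by (simp add: inner_sum_left)

lemma favg_conv:
  fixes f :: "nat \<Rightarrow> real^'n \<Rightarrow> real"
  assumes N: "N \<ge> 1" and cv: "\<And>j. j \<in> {1..N} \<Longrightarrow> convex_on X (f j)"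
    and x: "x \<in> X" and y: "y \<in> X"
    and d: "\<And>j. j \<in> {1..N} \<Longrightarrow> (f j has_derivative (\<lambda>h. h \<bullet> g j x)) (at x)"
  shows "favg N f x + gavg N g x \<bullet> (y - x) \<le> favg N f y"
proof -
  have "(\<Sum>j=1..N. f j x + g j x \<bullet> (y - x)) \<le> (\<Sum>j=1..N. f j y)"
    by (rule sum_mono) (rule conv_grad[OF cv x y d])
  then have "(\<Sum>j=1..N. f j x) + (\<Sum>j=1..N. g j x \<bullet> (y - x)) \<le> (\<Sum>j=1..N. f j y)"
    by (simp add: sum.distrib)
  then show ?thesis using N unfolding favg_def gavg_inner
    by (simp add: divide_right_mono add_divide_distrib[symmetric])
qed

lemma favg_desc:
  fixes f :: "nat \<Rightarrow> real^'n \<Rightarrow> real"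
  assumes N: "N \<ge> 1" and X: "convex X" and x: "x \<in> X" and y: "y \<in> X" and H: "sym_pd H" and nu: "\<nu> > 0"
    and d: "\<And>j p. j \<in> {1..N} \<Longrightarrow> p \<in> X \<Longrightarrow> (f j has_derivative (\<lambda>h. h \<bullet> g j p)) (at p)"
    and L: "\<And>j p q. j \<in> {1..N} \<Longrightarrow> p \<in> X \<Longrightarrow> q \<in> X \<Longrightarrow>
       qf (matrix_inv H) (g j p - g j q) \<le> \<nu>^2 * qf H (p - q)"
  shows "favg N f y \<le> favg N f x + gavg N g x \<bullet> (y - x) + \<nu>/2 * qf H (y - x)"
proof -
  have "(\<Sum>j=1..N. f j y) \<le> (\<Sum>j=1..N. f j x + g j x \<bullet> (y - x) + \<nu>/2 * qf H (y - x))"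
    by (rule sum_mono) (rule descent[OF X x y H nu d L], auto)
  then have "(\<Sum>j=1..N. f j y) \<le> (\<Sum>j=1..N. f j x) + (\<Sum>j=1..N. g j x \<bullet> (y - x)) + real N * (\<nu>/2 * qf H (y - x))"
    by (simp add: sum.distrib)
  then have "(\<Sum>j=1..N. f j y) / real N \<le> ((\<Sum>j=1..N. f j x) + (\<Sum>j=1..N. g j x \<bullet> (y - x)) + real N * (\<nu>/2 * qf H (y - x))) / real N"
    using N by (intro divide_right_mono) auto
  then show ?thesis using N unfolding favg_def gavg_inner
    by (simp add: add_divide_distrib)
qed

lemma small_pos:
  fixes D K :: real
  assumes "\<And>\<theta>. 0 < \<theta> \<Longrightarrow> \<theta> \<le> 1 \<Longrightarrow> 0 \<le> \<theta> * D + \<theta>^2 / 2 * K"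
  shows "0 \<le> D"
proof (rule ccontr)
  assume "\<not> 0 \<le> D"
  then have Dn: "D < 0" by simp
  define \<theta> where "\<theta> = min 1 (- D / (\<bar>K\<bar> + 1))"
  have "0 < - D / (\<bar>K\<bar> + 1)" using Dn by (intro divide_pos_pos) auto
  then have tp: "0 < \<theta>" by (simp add: \<theta>_def)
  have t1: "\<theta> \<le> 1" by (simp add: \<theta>_def)
  have "\<theta> \<le> - D / (\<bar>K\<bar> + 1)" by (simp add: \<theta>_def)
  then have t2: "\<theta> * (\<bar>K\<bar> + 1) \<le> - D"
  proof -
    have pos: "0 < \<bar>K\<bar> + 1" by simp
    have "- D / (\<bar>K\<bar> + 1) * (\<bar>K\<bar> + 1) = - D" using pos by simp
    then show ?thesis using mult_right_mono[OF \<open>\<theta> \<le> - D / (\<bar>K\<bar> + 1)\<close>, of "\<bar>K\<bar> + 1"] by simp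
  qed
  have "\<theta> * \<bar>K\<bar> \<le> - D" using t2 tp by (simp add: algebra_simps)
  then have "\<theta> * \<bar>K\<bar> / 2 < - D" using Dn by simp
  moreover have "\<theta> * K \<le> \<theta> * \<bar>K\<bar>" using tp by (intro mult_left_mono) auto
  ultimately have "D + \<theta> * K / 2 < 0" by linarith
  then have "\<theta> * (D + \<theta> * K / 2) < 0" using tp by (simp add: mult_pos_neg)
  moreover have "\<theta> * (D + \<theta> * K / 2) = \<theta> * D + \<theta>^2 / 2 * K" by (simp add: algebra_simps power2_eq_square)
  ultimately show False using assms[OF tp t1] by simp
qed

lemma argmin_3pt:
  fixes c a b p z :: "real^'n"
  assumes X: "convex X" and sH: "transpose H = H" and sM: "transpose M = M"
    and am: "is_arg_min (\<lambda>z. c \<bullet> z + \<alpha> / 2 * qf H (z - a) + 1/2 * qf M (z - b)) (\<lambda>z. z \<in> X) p"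
    and z: "z \<in> X"
  shows "c \<bullet> z + \<alpha> / 2 * qf H (z - a) + 1/2 * qf M (z - b) \<ge>
         c \<bullet> p + \<alpha> / 2 * qf H (p - a) + 1/2 * qf M (p - b) + \<alpha>/2 * qf H (z - p) + 1/2 * qf M (z - p)"
proof -
  define \<psi> where "\<psi> z = c \<bullet> z + \<alpha> / 2 * qf H (z - a) + 1/2 * qf M (z - b)" for z
  define v where "v = z - p"
  define D where "D = c \<bullet> v + \<alpha> * ((p - a) \<bullet> (H *v v)) + (p - b) \<bullet> (M *v v)"
  define K where "K = \<alpha> * qf H v + qf M v"
  have exp: "\<psi> (p + \<theta> *\<^sub>R v) = \<psi> p + \<theta> * D + \<theta>^2 / 2 * K" for \<theta>
  proof -
    have e1: "p + \<theta> *\<^sub>R v - a = (p - a) + \<theta> *\<^sub>R v" "p + \<theta> *\<^sub>R v - b = (p - b) + \<theta> *\<^sub>R v" by simp_all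
    show ?thesis unfolding \<psi>_def e1 qf_add[OF sH] qf_add[OF sM] qf_scale D_def K_def
      by (simp add: matrix_vector_mult_scaleR inner_add_right algebra_simps power2_eq_square)
  qed
  have pX: "p \<in> X" and nolt: "\<And>y. y \<in> X \<Longrightarrow> \<not> \<psi> y < \<psi> p"
    using am unfolding is_arg_min_def \<psi>_def by auto
  have "0 \<le> D"
  proof (rule small_pos)
    fix \<theta> :: real assume t: "0 < \<theta>" "\<theta> \<le> 1"
    have "p + \<theta> *\<^sub>R v = (1 - \<theta>) *\<^sub>R p + \<theta> *\<^sub>R z" by (simp add: v_def algebra_simps)
    then have "p + \<theta> *\<^sub>R v \<in> X" using convexD[OF X pX z, of "1 - \<theta>" \<theta>] t by simp
    then have "\<psi> p \<le> \<psi> (p + \<theta> *\<^sub>R v)" using nolt by force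
    then show "0 \<le> \<theta> * D + \<theta>^2 / 2 * K" using exp by simp
  qed
  moreover have "\<psi> z = \<psi> p + D + K / 2" using exp[of 1] by (simp add: v_def)
  ultimately have "\<psi> z \<ge> \<psi> p + K / 2" by simp
  then show ?thesis unfolding \<psi>_def K_def v_def by (simp add: field_simps)
qed

lemma inner_transpose: "u \<bullet> (transpose (A::real^'n^'m) *v y) = (A *v u) \<bullet> y"
  by (metis dot_lmul_matrix inner_commute transpose_matrix_vector)

lemma combine:
  fixes B \<gamma> \<nu> E c0 Q a Fx1 Fxt Fz G1 D1 S Y qz qb1 qx1 qxt P0 P1 Mz1 Mx1 Mzt :: real
  assumes h1: "Fx1 \<le> (1-B)*Fxt + B*Fz + B*G1 + \<nu>/2*(B^2*Q)"
  and h2: "G1 = D1 + S + Y"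
  and h3: "D1 \<le> qz - qb1 + \<gamma>/2*(P0 - Q - P1) - 1/2*Mz1"
  and h4: "qx1 + 1/2*Mx1 \<le> (1-B)*(qxt + 1/2*Mzt) + B*(qb1 + 1/2*Mz1)"
  and h5: "B*Y \<le> E*a + c0/2*Q"
  and h6: "c0 \<le> B*\<gamma> - \<nu>*B^2" and Q: "0 \<le> Q" and B: "0 \<le> B"
  shows "Fx1 + qx1 - Fz - qz + 1/2*Mx1 \<le> (1-B)*(Fxt + qxt - Fz - qz + 1/2*Mzt) + B*\<gamma>/2*(P0 - P1) + B*S + E*a"
proof -
  have e1: "B*D1 \<le> B*(qz - qb1 + \<gamma>/2*(P0 - Q - P1) - 1/2*Mz1)" using h3 B by (rule mult_left_mono)
  have e2: "c0/2*Q \<le> (B*\<gamma> - \<nu>*B^2)/2*Q" using h6 Q by (intro mult_right_mono) auto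
  have eq: "((1-B)*(Fxt + qxt - Fz - qz + 1/2*Mzt) + B*\<gamma>/2*(P0 - P1) + B*S + E*a) - (Fx1 + qx1 - Fz - qz + 1/2*Mx1)
    = (((1-B)*Fxt + B*Fz + B*G1 + \<nu>/2*(B^2*Q)) - Fx1) + (((1-B)*(qxt + 1/2*Mzt) + B*(qb1 + 1/2*Mz1)) - (qx1 + 1/2*Mx1))
      + ((E*a + c0/2*Q) - B*Y) + (B*(qz - qb1 + \<gamma>/2*(P0 - Q - P1) - 1/2*Mz1) - B*D1) + ((B*\<gamma> - \<nu>*B^2)/2*Q - c0/2*Q)"
    unfolding h2 by (simp add: field_simps power2_eq_square)
  show ?thesis using h1 h4 h5 e1 e2 eq by linarith
qed

lemma aux1: fixes t \<eta> e :: real assumes "t > 0" "\<eta> > 0" "e > 0"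
  shows "(2/(t+1))^2 / (2*(4*e/(t*(t+1)*\<eta>))) = t*\<eta>/(2*(t+1)*e)"
proof -
  have p: "t + 1 > 0" using assms by simp
  define u where "u = t + 1"
  have "u > 0" using p u_def by simp
  then show ?thesis unfolding u_def[symmetric] using assms by (simp add: field_simps power2_eq_square)
qed
lemma aux2: fixes t \<eta> e c :: real assumes "t > 0" "\<eta> > 0" "e > 0"
  shows "t*(t+1)/2 * ((1 - 2/(t+1))*P + 2/(t+1)*(2/(t*\<eta>))/2*D + 2/(t+1)*S + t*\<eta>/(2*(t+1)*e)*a)
    = (t - 1)*t/2*P + 1/\<eta>*D + t*S + \<eta>/(4*e)*(t^2*a)"
proof -
  define u where "u = t + 1"
  have "u > 0" using assms u_def by simp
  have "t*u/2 * ((1 - 2/u)*P + 2/u*(2/(t*\<eta>))/2*D + 2/u*S + t*\<eta>/(2*u*e)*a)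
    = (u - 2)*t/2*P + 1/\<eta>*D + t*S + \<eta>/(4*e)*(t^2*a)"
    using assms \<open>u > 0\<close> by (simp add: field_simps power2_eq_square)
  then show ?thesis unfolding u_def by (simp add: algebra_simps)
qed

lemma aux3: fixes t \<eta> \<nu> :: real assumes "t > 0" "\<eta> > 0"
  shows "4 * (1 - \<eta> * \<nu>) / (t * (t + 1) * \<eta>) = 2 / (t + 1) * (2 / (t * \<eta>)) - 4 * \<nu> / (t * (t + 1))"
proof -
  define u where "u = t + 1"
  have "u > 0" using assms u_def by simp
  have "4 * (1 - \<eta> * \<nu>) / (t * u * \<eta>) = 2 / u * (2 / (t * \<eta>)) - 4 * \<nu> / (t * u)"
    using assms \<open>u > 0\<close> by (simp add: field_simps)
  then show ?thesis unfolding u_def .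
qed

lemma inner_vmul: "u \<bullet> (y v* (A::real^'n^'m)) = (A *v u) \<bullet> y"
  using inner_transpose[of u A y] by simp

lemma qf_comb: "transpose M = M \<Longrightarrow>
  qf M (p + B *\<^sub>R r) = (1 - B) * qf M p + B * qf M (p + r) - B * (1 - B) * qf M r"
  by (simp add: qf_add qf_scale algebra_simps power2_eq_square matrix_vector_mult_scaleR)

theorem theorem4p2:
  fixes X :: "(real^'n) set"
    and A :: "real^'n^'m" and b :: "real^'m"
    and N :: nat and f :: "nat \<Rightarrow> real^'n \<Rightarrow> real" and g :: "nat \<Rightarrow> real^'n \<Rightarrow> real^'n"
    and U :: "(real^'n) set"
    and H :: "real^'n^'n" and \<nu> :: real and \<beta> :: real and s :: real
    and x xb :: "nat \<Rightarrow> real^'n" and lam :: "nat \<Rightarrow> real^'m"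
    and m :: "nat \<Rightarrow> nat" and eta :: "nat \<Rightarrow> real" and M :: "nat \<Rightarrow> real^'n^'n"
    and xi :: "nat \<Rightarrow> nat \<Rightarrow> nat" and e :: "nat \<Rightarrow> nat \<Rightarrow> real^'n"
    and xin xbin xhat d :: "nat \<Rightarrow> nat \<Rightarrow> real^'n"
    and k :: nat
  assumes X: "X \<noteq> {}" "closed X" "convex X"
    and N: "N \<ge> 1"
    and U: "open U" "X \<subseteq> U"
    and grad: "\<And>j y. j \<in> {1..N} \<Longrightarrow> y \<in> U \<Longrightarrow> GDERIV (f j) y :> g j y"
    and grad_cont: "\<And>j. j \<in> {1..N} \<Longrightarrow> continuous_on U (g j)"
    and fconv: "\<And>j. j \<in> {1..N} \<Longrightarrow> convex_on X (f j)"
    and H: "sym_pd H"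
    and nu: "\<nu> > 0"
    and Lip: "\<And>j x1 x2. j \<in> {1..N} \<Longrightarrow> x1 \<in> X \<Longrightarrow> x2 \<in> X \<Longrightarrow>
               sqrt (qf (matrix_inv H) (g j x1 - g j x2)) \<le> \<nu> * sqrt (qf H (x1 - x2))"
    and beta: "\<beta> > 0"
    and s: "0 < s" "s \<le> 2"
    \<comment> \<open>AS-ALM: initialization\<close>
    and init: "x 0 \<in> X" "xb 0 = x 0"
    \<comment> \<open>AS-ALM: parameter choices in every outer iteration\<close>
    and mk: "\<And>i. m i \<ge> 1"
    and etak: "\<And>i. eta i > 0"
    and Msym: "\<And>i. transpose (M i) = M i"
    and Dk: "\<And>i. psd (M i - \<beta> *\<^sub>R (transpose A ** A))"
    \<comment> \<open>xsub, called with inputs x i, xb i, h^i, m i, eta i, M i\<close>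
    and sub_init: "\<And>i. xin i 1 = x i" "\<And>i. xbin i 1 = xb i"
    and sub_xi: "\<And>i t. 1 \<le> t \<Longrightarrow> t \<le> m i \<Longrightarrow> xi i t \<in> {1..N}"
    and sub_xhat: "\<And>i t. 1 \<le> t \<Longrightarrow> t \<le> m i \<Longrightarrow>
        xhat i t = (2 / (real t + 1)) *\<^sub>R xbin i t + (1 - 2 / (real t + 1)) *\<^sub>R xin i t"
    and sub_d: "\<And>i t. 1 \<le> t \<Longrightarrow> t \<le> m i \<Longrightarrow> d i t = g (xi i t) (xhat i t) + e i t"
    and sub_argmin: "\<And>i t. 1 \<le> t \<Longrightarrow> t \<le> m i \<Longrightarrow>
        is_arg_min (\<lambda>z. (d i t - transpose A *v (lam i - \<beta> *\<^sub>R (A *v x i - b))) \<bullet> z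
                        + (2 / (real t * eta i)) / 2 * qf H (z - xbin i t)
                        + 1 / 2 * qf (M i) (z - x i))
                   (\<lambda>z. z \<in> X) (xbin i (t + 1))"
    and sub_x: "\<And>i t. 1 \<le> t \<Longrightarrow> t \<le> m i \<Longrightarrow>
        xin i (t + 1) = (2 / (real t + 1)) *\<^sub>R xbin i (t + 1) + (1 - 2 / (real t + 1)) *\<^sub>R xin i t"
    and sub_out: "\<And>i. x (Suc i) = xin i (m i + 1)" "\<And>i. xb (Suc i) = xbin i (m i + 1)"
    \<comment> \<open>AS-ALM: multiplier update\<close>
    and lam_upd: "\<And>i. lam (Suc i) = lam i - (s * \<beta>) *\<^sub>R (A *v x (Suc i) - b)"
    \<comment> \<open>the fixed outer index k\<close>
    and eta_k: "eta k < 1 / \<nu>"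
  shows "x (Suc k) \<in> X \<and>
    (\<forall>z\<in>X. \<forall>l::real^'m.
      let lt = lam k - \<beta> *\<^sub>R (A *v x (Suc k) - b);
          \<delta> = (\<lambda>t. gavg N g (xhat k t) - d k t);
          \<zeta> = 2 / (real (m k) * (real (m k) + 1)) *
                ( 1 / eta k * (qf H (z - xb (Suc k)) - qf H (z - xb k))
                  - (\<Sum>t=1..m k. real t * (\<delta> t \<bullet> (xbin k t - z)))
                  - eta k / (4 * (1 - eta k * \<nu>)) *
                      (\<Sum>t=1..m k. (real t)^2 * qf (matrix_inv H) (\<delta> t)))
      in favg N f z - favg N f (x (Suc k))
           + ((z - x (Suc k)) \<bullet> (- (transpose A *v l)) + (l - lt) \<bullet> (A *v z - b))
         \<ge> (z - x (Suc k)) \<bullet> ((M k - \<beta> *\<^sub>R (transpose A ** A)) *v (x k - x (Suc k)))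
           + (1 / \<beta>) * ((l - lt) \<bullet> (lam k - lt))
           + \<zeta>)"
proof -
  have sH: "transpose H = H" using H sym_pd_def by blast
  have Xc: "convex X" using X by simp
  have dF: "\<And>j p. j \<in> {1..N} \<Longrightarrow> p \<in> X \<Longrightarrow> (f j has_derivative (\<lambda>h. h \<bullet> g j p)) (at p)"
    using grad U(2) unfolding gderiv_def by blast
  have Lip2: "\<And>j p q. j \<in> {1..N} \<Longrightarrow> p \<in> X \<Longrightarrow> q \<in> X \<Longrightarrow>
      qf (matrix_inv H) (g j p - g j q) \<le> \<nu>^2 * qf H (p - q)"
  proof -
    fix j p q assume a: "j \<in> {1..N}" "p \<in> X" "q \<in> X"
    have s1: "sqrt (qf (matrix_inv H) (g j p - g j q)) \<le> \<nu> * sqrt (qf H (p - q))" using Lip a by blast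
    have n1: "0 \<le> qf (matrix_inv H) (g j p - g j q)" by (rule qf_inv_nonneg[OF H])
    have n2: "0 \<le> qf H (p - q)" by (rule pd_nonneg[OF H])
    have "(sqrt (qf (matrix_inv H) (g j p - g j q)))^2 \<le> (\<nu> * sqrt (qf H (p - q)))^2"
      using s1 n1 by (intro power_mono) auto
    then show "qf (matrix_inv H) (g j p - g j q) \<le> \<nu>^2 * qf H (p - q)"
      using n1 n2 by (simp add: power_mult_distrib)
  qed
  have psdM: "\<And>i v. 0 \<le> qf (M i) v"
  proof -
    fix i v
    have "qf (M i) v = qf (M i - \<beta> *\<^sub>R (transpose A ** A)) v + \<beta> * ((A *v v) \<bullet> (A *v v))"
      unfolding qf_def
      by (simp add: matrix_vector_mult_diff_rdistrib scaleR_matrix_vector_assoc[symmetric]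
           matrix_vector_mul_assoc[symmetric] inner_diff_right inner_vmul)
    then show "0 \<le> qf (M i) v" using Dk[of i] beta unfolding psd_def by simp
  qed
  have inner_mem: "\<And>i. x i \<in> X \<Longrightarrow> xb i \<in> X \<Longrightarrow> \<forall>t. 1 \<le> t \<longrightarrow> t \<le> m i + 1 \<longrightarrow> xin i t \<in> X \<and> xbin i t \<in> X"
  proof -
    fix i assume xi: "x i \<in> X" "xb i \<in> X"
    show "\<forall>t. 1 \<le> t \<longrightarrow> t \<le> m i + 1 \<longrightarrow> xin i t \<in> X \<and> xbin i t \<in> X"
    proof
      fix t show "1 \<le> t \<longrightarrow> t \<le> m i + 1 \<longrightarrow> xin i t \<in> X \<and> xbin i t \<in> X"
      proof (induction t)
        case 0 then show ?case by simp
      next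
        case (Suc t)
        show ?case
        proof (cases "t = 0")
          case True then show ?thesis using xi sub_init by simp
        next
          case False
          show ?thesis
          proof (intro impI)
            assume "Suc t \<le> m i + 1"
            then have t: "1 \<le> t" "t \<le> m i" using False by auto
            then have IH: "xin i t \<in> X" using Suc.IH by simp
            have b: "xbin i (t+1) \<in> X" using sub_argmin[OF t] unfolding is_arg_min_def by blast
            have c1: "0 \<le> 2 / (real t + 1)" "0 \<le> 1 - 2 / (real t + 1)" using t by (auto simp: field_simps)
            have "xin i (t+1) \<in> X" unfolding sub_x[OF t] by (rule convexD[OF Xc b IH c1]) simp
            then show "xin i (Suc t) \<in> X \<and> xbin i (Suc t) \<in> X" using b by simp
          qed
        qed
      qed
    qed
  qed
  have outer: "x i \<in> X \<and> xb i \<in> X" for i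
  proof (induction i)
    case 0 then show ?case using init by simp
  next
    case (Suc i)
    then show ?case using inner_mem[of i] sub_out[of i] mk[of i] by auto
  qed
  have xk: "x k \<in> X" "xb k \<in> X" using outer by auto
  have memk: "\<And>t. 1 \<le> t \<Longrightarrow> t \<le> m k + 1 \<Longrightarrow> xin k t \<in> X \<and> xbin k t \<in> X"
    using inner_mem[OF xk] by blast
  have sMk: "transpose (M k) = M k" by (rule Msym)
  have etap: "eta k > 0" by (rule etak)
  have env: "1 - eta k * \<nu> > 0" using eta_k nu by (simp add: field_simps)
  have main: "\<forall>z\<in>X. \<forall>l::real^'m.
      let lt = lam k - \<beta> *\<^sub>R (A *v x (Suc k) - b);
          \<delta> = (\<lambda>t. gavg N g (xhat k t) - d k t);
          \<zeta> = 2 / (real (m k) * (real (m k) + 1)) *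
                ( 1 / eta k * (qf H (z - xb (Suc k)) - qf H (z - xb k))
                  - (\<Sum>t=1..m k. real t * (\<delta> t \<bullet> (xbin k t - z)))
                  - eta k / (4 * (1 - eta k * \<nu>)) *
                      (\<Sum>t=1..m k. (real t)^2 * qf (matrix_inv H) (\<delta> t)))
      in favg N f z - favg N f (x (Suc k))
           + ((z - x (Suc k)) \<bullet> (- (transpose A *v l)) + (l - lt) \<bullet> (A *v z - b))
         \<ge> (z - x (Suc k)) \<bullet> ((M k - \<beta> *\<^sub>R (transpose A ** A)) *v (x k - x (Suc k)))
           + (1 / \<beta>) * ((l - lt) \<bullet> (lam k - lt))
           + \<zeta>"
  proof (intro ballI allI)
    fix z l assume z: "z \<in> X"
    define lamh where "lamh = lam k - \<beta> *\<^sub>R (A *v x k - b)"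
    define hv where "hv = - (transpose A *v lamh)"
    define q where "q y = hv \<bullet> y + 1/2 * qf (M k) (y - x k)" for y
    define F where "F = favg N f"
    define \<Psi> where "\<Psi> t = F (xin k t) + q (xin k t) - F z - q z + 1/2 * qf (M k) (z - xin k t)" for t
    define \<delta> where "\<delta> t = gavg N g (xhat k t) - d k t" for t
    define C where "C = eta k / (4 * (1 - eta k * \<nu>))"
    have step: "real t * (real t + 1) / 2 * \<Psi> (t+1) \<le> (real t - 1) * real t / 2 * \<Psi> t
        + 1 / eta k * (qf H (z - xbin k t) - qf H (z - xbin k (t+1)))
        + real t * (\<delta> t \<bullet> (xbin k t - z)) + C * ((real t)^2 * qf (matrix_inv H) (\<delta> t))"
      if t: "1 \<le> t" "t \<le> m k" for t
    proof -
      define B where "B = 2 / (real t + 1)"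
      define \<gamma> where "\<gamma> = 2 / (real t * eta k)"
      define xt where "xt = xin k t"
      define xt1 where "xt1 = xin k (t+1)"
      define bt where "bt = xbin k t"
      define bt1 where "bt1 = xbin k (t+1)"
      define xh where "xh = xhat k t"
      define dt where "dt = d k t"
      define gh where "gh = gavg N g xh"
      define Q where "Q = qf H (bt1 - bt)"
      define a where "a = qf (matrix_inv H) (\<delta> t)"
      define c0 where "c0 = 4 * (1 - eta k * \<nu>) / (real t * (real t + 1) * eta k)"
      define E where "E = real t * eta k / (2 * (real t + 1) * (1 - eta k * \<nu>))"
      have tr: "real t \<ge> 1" using t by simp
      have nz: "real t \<noteq> 0" "real t + 1 \<noteq> 0" "eta k \<noteq> 0" "1 - eta k * \<nu> \<noteq> 0"
        using tr etap env by auto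
      have xtX: "xt \<in> X" and btX: "bt \<in> X" using memk[of t] t unfolding xt_def bt_def by auto
      have xt1X: "xt1 \<in> X" and bt1X: "bt1 \<in> X" using memk[of "t+1"] t unfolding xt1_def bt1_def by auto
      have Bp: "0 < B" "B \<le> 1" using tr unfolding B_def by (auto simp: field_simps)
      have xt1_eq: "xt1 = B *\<^sub>R bt1 + (1 - B) *\<^sub>R xt"
        unfolding xt1_def bt1_def xt_def B_def using sub_x[OF t] by simp
      have xh_eq: "xh = B *\<^sub>R bt + (1 - B) *\<^sub>R xt"
        unfolding xh_def bt_def xt_def B_def using sub_xhat[OF t] by simp
      have xhX: "xh \<in> X" unfolding xh_eq using Bp by (intro convexD[OF Xc btX xtX]) auto
      have F1: "F xt1 \<le> F xh + gh \<bullet> (xt1 - xh) + \<nu>/2 * qf H (xt1 - xh)"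
        unfolding F_def gh_def by (rule favg_desc[where f=f and g=g, OF N Xc xhX xt1X H nu dF Lip2])
      have diff: "xt1 - xh = B *\<^sub>R (bt1 - bt)" by (simp add: xt1_eq xh_eq algebra_simps)
      have F2: "F xh + gh \<bullet> (xt - xh) \<le> F xt"
        unfolding F_def gh_def by (rule favg_conv[where f=f and g=g, OF N fconv xhX xtX dF[OF _ xhX]])
      have F3: "F xh + gh \<bullet> (z - xh) \<le> F z"
        unfolding F_def gh_def by (rule favg_conv[where f=f and g=g, OF N fconv xhX z dF[OF _ xhX]])
      have id1: "F xh + gh \<bullet> (xt1 - xh) = (1-B)*(F xh + gh \<bullet> (xt - xh)) + B*(F xh + gh \<bullet> (z - xh)) + B*(gh \<bullet> (bt1 - z))"
        by (simp add: xt1_eq inner_diff_right inner_add_right algebra_simps)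
      have m1: "(1-B)*(F xh + gh \<bullet> (xt - xh)) \<le> (1-B)*F xt" using F2 Bp by (intro mult_left_mono) auto
      have m2: "B*(F xh + gh \<bullet> (z - xh)) \<le> B*F z" using F3 Bp by (intro mult_left_mono) auto
      have H1: "F xt1 \<le> (1-B)*F xt + B*F z + B*(gh \<bullet> (bt1 - z)) + \<nu>/2*(B^2*Q)"
        using F1 id1 m1 m2 unfolding diff qf_scale Q_def by linarith
      have a4: "(dt + hv) \<bullet> z + \<gamma>/2 * qf H (z - bt) + 1/2 * qf (M k) (z - x k) \<ge>
          (dt + hv) \<bullet> bt1 + \<gamma>/2 * qf H (bt1 - bt) + 1/2 * qf (M k) (bt1 - x k) + \<gamma>/2 * qf H (z - bt1) + 1/2 * qf (M k) (z - bt1)"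
      proof -
        have e: "dt + hv = d k t - transpose A *v (lam k - \<beta> *\<^sub>R (A *v x k - b))"
          by (simp add: dt_def hv_def lamh_def)
        show ?thesis unfolding e \<gamma>_def bt_def bt1_def
          using argmin_3pt[OF Xc sH sMk sub_argmin[OF t] z] by simp
      qed
      have H3: "dt \<bullet> (bt1 - z) \<le> q z - q bt1 + \<gamma>/2*(qf H (z - bt) - Q - qf H (z - bt1)) - 1/2*qf (M k) (z - bt1)"
        using a4 unfolding q_def Q_def by (simp add: inner_add_left inner_diff_right algebra_simps)
      have id2: "gh \<bullet> (bt1 - z) = dt \<bullet> (bt1 - z) + \<delta> t \<bullet> (bt - z) + \<delta> t \<bullet> (bt1 - bt)"
        unfolding \<delta>_def gh_def xh_def dt_def by (simp add: inner_diff_left inner_diff_right algebra_simps)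
      have c1: "qf (M k) (xt1 - x k) = (1-B)*qf (M k) (xt - x k) + B*qf (M k) (bt1 - x k) - B*(1-B)*qf (M k) (bt1 - xt)"
      proof -
        have e: "xt1 - x k = (xt - x k) + B *\<^sub>R (bt1 - xt)" by (simp add: xt1_eq algebra_simps)
        have f: "(xt - x k) + (bt1 - xt) = bt1 - x k" by simp
        show ?thesis unfolding e using qf_comb[OF sMk, of "xt - x k" B "bt1 - xt"] unfolding f .
      qed
      have c2: "qf (M k) (z - xt1) = (1-B)*qf (M k) (z - xt) + B*qf (M k) (z - bt1) - B*(1-B)*qf (M k) (xt - bt1)"
      proof -
        have e: "z - xt1 = (z - xt) + B *\<^sub>R (xt - bt1)" by (simp add: xt1_eq algebra_simps)
        have f: "(z - xt) + (xt - bt1) = z - bt1" by simp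
        show ?thesis unfolding e using qf_comb[OF sMk, of "z - xt" B "xt - bt1"] unfolding f .
      qed
      have hl: "hv \<bullet> xt1 = B * (hv \<bullet> bt1) + (1 - B) * (hv \<bullet> xt)" by (simp add: xt1_eq inner_add_right)
      have n1: "0 \<le> B*(1-B)*qf (M k) (bt1 - xt)" "0 \<le> B*(1-B)*qf (M k) (xt - bt1)"
        using Bp psdM by auto
      have eq4: "((1-B)*(q xt + 1/2*qf (M k) (z - xt)) + B*(q bt1 + 1/2*qf (M k) (z - bt1))) - (q xt1 + 1/2*qf (M k) (z - xt1))
         = 1/2*(B*(1-B)*qf (M k) (bt1 - xt)) + 1/2*(B*(1-B)*qf (M k) (xt - bt1))"
        unfolding q_def c1 c2 hl by (simp add: field_simps)
      have H4: "q xt1 + 1/2*qf (M k) (z - xt1) \<le> (1-B)*(q xt + 1/2*qf (M k) (z - xt)) + B*(q bt1 + 1/2*qf (M k) (z - bt1))"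
        using eq4 n1 by linarith
      have c0p: "0 < c0" unfolding c0_def using tr etap env by simp
      have y: "\<delta> t \<bullet> (bt1 - bt) \<le> a / (2 * (c0 / B)) + (c0 / B) / 2 * Q"
        unfolding a_def Q_def by (rule young_H[OF H]) (use c0p Bp in simp)
      have "B * (\<delta> t \<bullet> (bt1 - bt)) \<le> B * (a / (2 * (c0 / B)) + (c0 / B) / 2 * Q)"
        using y Bp by (intro mult_left_mono) auto
      also have "B * (a / (2 * (c0 / B)) + (c0 / B) / 2 * Q) = (B^2 / (2*c0))*a + c0/2*Q"
        using Bp c0p by (simp add: field_simps power2_eq_square)
      also have "B^2 / (2*c0) = E" unfolding B_def c0_def E_def
        by (rule aux1) (use tr etap env in auto)
      finally have H5: "B * (\<delta> t \<bullet> (bt1 - bt)) \<le> E*a + c0/2*Q" .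
      have ceq: "c0 = B*\<gamma> - 4*\<nu>/(real t*(real t+1))"
        unfolding c0_def B_def \<gamma>_def by (rule aux3) (use tr etap in auto)
      have "\<nu>*B^2 = 4*\<nu>/((real t+1)^2)" unfolding B_def by (simp add: power_divide)
      also have "\<dots> \<le> 4*\<nu>/(real t*(real t+1))"
        using tr nu by (intro frac_le) (auto simp: power2_eq_square)
      finally have H6: "c0 \<le> B*\<gamma> - \<nu>*B^2" using ceq by linarith
      have Qn: "0 \<le> Q" unfolding Q_def by (rule pd_nonneg[OF H])
      have U: "F xt1 + q xt1 - F z - q z + 1/2*qf (M k) (z - xt1) \<le>
          (1-B)*(F xt + q xt - F z - q z + 1/2*qf (M k) (z - xt)) + B*\<gamma>/2*(qf H (z - bt) - qf H (z - bt1)) + B*(\<delta> t \<bullet> (bt - z)) + E*a"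
        by (rule combine[OF H1 id2 H3 H4 H5 H6 Qn]) (use Bp in simp)
      have Tp: "0 \<le> real t * (real t + 1) / 2" by simp
      have "real t * (real t + 1) / 2 * (F xt1 + q xt1 - F z - q z + 1/2*qf (M k) (z - xt1)) \<le>
          real t * (real t + 1) / 2 * ((1-B)*(F xt + q xt - F z - q z + 1/2*qf (M k) (z - xt)) + B*\<gamma>/2*(qf H (z - bt) - qf H (z - bt1)) + B*(\<delta> t \<bullet> (bt - z)) + E*a)"
        using U Tp by (rule mult_left_mono)
      also have "\<dots> = (real t - 1) * real t / 2 * (F xt + q xt - F z - q z + 1/2*qf (M k) (z - xt))
          + 1 / eta k * (qf H (z - bt) - qf H (z - bt1)) + real t * (\<delta> t \<bullet> (bt - z)) + C * ((real t)^2 * a)"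
        unfolding B_def \<gamma>_def E_def C_def by (rule aux2) (use tr etap env in auto)
      finally show ?thesis unfolding \<Psi>_def xt_def xt1_def bt_def bt1_def a_def .
    qed
    have tele: "n \<le> m k \<Longrightarrow> real n * (real n + 1) / 2 * \<Psi> (n+1) \<le>
        1 / eta k * (qf H (z - xbin k 1) - qf H (z - xbin k (n+1)))
        + (\<Sum>t=1..n. real t * (\<delta> t \<bullet> (xbin k t - z)))
        + C * (\<Sum>t=1..n. (real t)^2 * qf (matrix_inv H) (\<delta> t))" for n
    proof (induction n)
      case 0 then show ?case by simp
    next
      case (Suc n)
      have s: "real (Suc n) * (real (Suc n) + 1) / 2 * \<Psi> (Suc n + 1) \<le> (real (Suc n) - 1) * real (Suc n) / 2 * \<Psi> (Suc n)
        + 1 / eta k * (qf H (z - xbin k (Suc n)) - qf H (z - xbin k (Suc n + 1)))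
        + real (Suc n) * (\<delta> (Suc n) \<bullet> (xbin k (Suc n) - z)) + C * ((real (Suc n))^2 * qf (matrix_inv H) (\<delta> (Suc n)))"
        using step[of "Suc n"] Suc.prems by simp
      have c: "(real (Suc n) - 1) * real (Suc n) / 2 = real n * (real n + 1) / 2" by simp
      have ih: "real n * (real n + 1) / 2 * \<Psi> (n+1) \<le>
        1 / eta k * (qf H (z - xbin k 1) - qf H (z - xbin k (n+1)))
        + (\<Sum>t=1..n. real t * (\<delta> t \<bullet> (xbin k t - z)))
        + C * (\<Sum>t=1..n. (real t)^2 * qf (matrix_inv H) (\<delta> t))" using Suc by simp
      show ?case using s ih unfolding c by (simp add: distrib_left algebra_simps)
    qed
    show "let lt = lam k - \<beta> *\<^sub>R (A *v x (Suc k) - b);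
          \<delta> = (\<lambda>t. gavg N g (xhat k t) - d k t);
          \<zeta> = 2 / (real (m k) * (real (m k) + 1)) *
                ( 1 / eta k * (qf H (z - xb (Suc k)) - qf H (z - xb k))
                  - (\<Sum>t=1..m k. real t * (\<delta> t \<bullet> (xbin k t - z)))
                  - eta k / (4 * (1 - eta k * \<nu>)) *
                      (\<Sum>t=1..m k. (real t)^2 * qf (matrix_inv H) (\<delta> t)))
      in favg N f z - favg N f (x (Suc k))
           + ((z - x (Suc k)) \<bullet> (- (transpose A *v l)) + (l - lt) \<bullet> (A *v z - b))
         \<ge> (z - x (Suc k)) \<bullet> ((M k - \<beta> *\<^sub>R (transpose A ** A)) *v (x k - x (Suc k)))
           + (1 / \<beta>) * ((l - lt) \<bullet> (lam k - lt))
           + \<zeta>"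
    proof -
      define xp where "xp = x (Suc k)"
      define lt where "lt = lam k - \<beta> *\<^sub>R (A *v xp - b)"
      define S1 where "S1 = (\<Sum>t=1..m k. real t * ((gavg N g (xhat k t) - d k t) \<bullet> (xbin k t - z)))"
      define S2 where "S2 = (\<Sum>t=1..m k. (real t)^2 * qf (matrix_inv H) (gavg N g (xhat k t) - d k t))"
      define R where "R = 1 / eta k * (qf H (z - xb k) - qf H (z - xb (Suc k))) + S1 + C * S2"
      define \<zeta> where "\<zeta> = 2 / (real (m k) * (real (m k) + 1)) *
                ( 1 / eta k * (qf H (z - xb (Suc k)) - qf H (z - xb k)) - S1
                  - eta k / (4 * (1 - eta k * \<nu>)) * S2)"
      have T: "real (m k) * (real (m k) + 1) / 2 * \<Psi> (m k + 1) \<le> R"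
        using tele[of "m k"] sub_init(2)[of k] sub_out(2)[of k] unfolding R_def S1_def S2_def \<delta>_def by simp
      have mpos: "0 < real (m k) * (real (m k) + 1) / 2" using mk[of k] by simp
      have "\<Psi> (m k + 1) \<le> R / (real (m k) * (real (m k) + 1) / 2)"
        using T mpos by (simp add: pos_le_divide_eq mult.commute)
      also have "R / (real (m k) * (real (m k) + 1) / 2) = 2 / (real (m k) * (real (m k) + 1)) * R"
        by simp
      also have "\<dots> = - \<zeta>"
        unfolding R_def \<zeta>_def C_def by (simp add: algebra_simps)
      finally have Psi: "\<Psi> (m k + 1) \<le> - \<zeta>" .
      have xin_out: "xin k (m k + 1) = xp" using sub_out(1)[of k] xp_def by simp
      define u where "u = z - xp"
      define w where "w = x k - xp"
      have q1: "qf (M k) (xp - x k) - qf (M k) (z - x k) + qf (M k) (z - xp) = 2 * (u \<bullet> (M k *v w))"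
      proof -
        have "xp - x k = - w" "z - x k = u - w" "z - xp = u" by (simp_all add: u_def w_def)
        then show ?thesis using qf_diff[OF sMk, of u w] qf_minus[of "M k" w] by simp
      qed
      have Dw: "(M k - \<beta> *\<^sub>R (transpose A ** A)) *v w = M k *v w - \<beta> *\<^sub>R (transpose A *v (A *v w))"
        by (simp add: matrix_vector_mult_diff_rdistrib scaleR_matrix_vector_assoc[symmetric] matrix_vector_mul_assoc[symmetric])
      have i1: "u \<bullet> ((M k - \<beta> *\<^sub>R (transpose A ** A)) *v w) = u \<bullet> (M k *v w) - \<beta> * ((A *v u) \<bullet> (A *v w))"
        unfolding Dw by (simp add: inner_diff_right inner_vmul)
      have i2: "u \<bullet> (- (transpose A *v l)) = - ((A *v u) \<bullet> l)" by (simp add: inner_vmul)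
      have i3: "hv \<bullet> xp - hv \<bullet> z = (A *v u) \<bullet> lamh"
      proof -
        have "hv \<bullet> xp - hv \<bullet> z = u \<bullet> (transpose A *v lamh)" unfolding hv_def u_def by (simp add: inner_diff_left inner_diff_right inner_commute)
        then show ?thesis by (simp add: inner_vmul)
      qed
      have i4: "1 / \<beta> * ((l - lt) \<bullet> (lam k - lt)) = (l - lt) \<bullet> (A *v xp - b)"
        using beta by (simp add: lt_def)
      have z0: "lamh - lt + \<beta> *\<^sub>R (A *v w) = 0"
        by (simp add: lamh_def lt_def w_def matrix_vector_mult_diff_distrib algebra_simps)
      have i5: "(A *v u) \<bullet> lamh - (A *v u) \<bullet> l + (l - lt) \<bullet> (A *v z - b) + \<beta> * ((A *v u) \<bullet> (A *v w))
          = (l - lt) \<bullet> (A *v xp - b)"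
      proof -
        have "(l - lt) \<bullet> (A *v z - b) = (l - lt) \<bullet> (A *v xp - b) + (l - lt) \<bullet> (A *v u)"
          by (simp add: u_def matrix_vector_mult_diff_distrib inner_diff_right)
        moreover have "(A *v u) \<bullet> (lamh - lt + \<beta> *\<^sub>R (A *v w)) = 0" using z0 by simp
        ultimately show ?thesis by (simp add: inner_diff_right inner_add_right inner_commute algebra_simps)
      qed
      have ID: "q xp - q z + 1/2 * qf (M k) (z - xp) + (u \<bullet> (- (transpose A *v l)) + (l - lt) \<bullet> (A *v z - b))
          = u \<bullet> ((M k - \<beta> *\<^sub>R (transpose A ** A)) *v w) + 1 / \<beta> * ((l - lt) \<bullet> (lam k - lt))"
      proof -
        have "q xp - q z + 1/2 * qf (M k) (z - xp) = (hv \<bullet> xp - hv \<bullet> z) + 1/2 * (qf (M k) (xp - x k) - qf (M k) (z - x k) + qf (M k) (z - xp))"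
          unfolding q_def by (simp add: algebra_simps)
        then show ?thesis unfolding i1 i2 i3 i4 q1 using i5 by simp
      qed
      have PsiE: "\<Psi> (m k + 1) = F xp + q xp - F z - q z + 1/2 * qf (M k) (z - xp)"
        unfolding \<Psi>_def xin_out ..
      show ?thesis
        unfolding Let_def
        using Psi ID PsiE
        unfolding \<zeta>_def S1_def S2_def F_def u_def w_def xp_def lt_def
        by (simp add: C_def) 
    qed
  qed
  show ?thesis using outer[of "Suc k"] main by blast
qed

end
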